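(* Let $f\in\mathbb{Z}[x]$ be a cubic polynomial of non-zero discriminant and let $d$ be a square-free integer. There is a constant $C_f$ depending only on $f$ (not on $d$) such that for any two distinct integer points $P=(x,y)\in\mathbb{Z}^2$, $P'=(x',y')\in\mathbb{Z}^2$ on the elliptic curve $E_d: dy^2=f(x)$, \[\hat h(P+P')\le 3\max(\hat h(P),\hat h(P'))+C_f,\] where $\hat h$ is the canonical height on $E_d$ and $+$ is the group law of $E_d$.
   Context: For a point $Q$ of $E_d$, $h_x(Q)=0$ if $Q$ is the point at infinity $O$ (the origin of the group law), and $h_x(Q)=\log\max(|x_0|,|x_1|)$ if $Q=(x,y)$ with $x=x_0/x_1$, $\gcd(x_0,x_1)=1$. The canonical height is $\hat h(Q)=\frac12\lim_{n\to\infty}4^{-n}h_x([2^n]Q)$. *)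

theory Defs
  imports Complex_Main "HOL-Computational_Algebra.Computational_Algebra"
begin

definition cubic_disc :: "int poly \<Rightarrow> int" where
  "cubic_disc f = (let a = coeff f 3; b = coeff f 2; c = coeff f 1; e = coeff f 0 in
     b^2 * c^2 - 4 * a * c^3 - 4 * b^3 * e - 27 * a^2 * e^2 + 18 * a * b * c * e)"

text \<open>Rational points of E_d : d y^2 = f(x); Zero_pt is the point at infinity.\<close>
datatype ecpt = Zero_pt | Pt rat rat

definition on_curve :: "int poly \<Rightarrow> int \<Rightarrow> ecpt \<Rightarrow> bool" where
  "on_curve f d P = (case P of Zero_pt \<Rightarrow> True
     | Pt x y \<Rightarrow> of_int d * y^2 = poly (map_poly of_int f) x)"

text \<open>Chord-and-tangent group law on d y^2 = a x^3 + b x^2 + c x + e with origin Zero_pt.\<close>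
fun ec_add :: "int poly \<Rightarrow> int \<Rightarrow> ecpt \<Rightarrow> ecpt \<Rightarrow> ecpt" where
  "ec_add f d Zero_pt Q = Q"
| "ec_add f d P Zero_pt = P"
| "ec_add f d (Pt x1 y1) (Pt x2 y2) =
     (if x1 = x2 \<and> y1 + y2 = 0 then Zero_pt
      else (let fq = map_poly (of_int :: int \<Rightarrow> rat) f;
                l = (if x1 = x2 then poly (pderiv fq) x1 / (2 * of_int d * y1)
                     else (y2 - y1) / (x2 - x1));
                x3 = (of_int d * l^2 - coeff fq 2) / coeff fq 3 - x1 - x2;
                y3 = l * (x1 - x3) - y1
            in Pt x3 y3))"

fun hx :: "ecpt \<Rightarrow> real" where
  "hx Zero_pt = 0"
| "hx (Pt x y) = (let (p, q) = quotient_of x in ln (real_of_int (max \<bar>p\<bar> \<bar>q\<bar>)))"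

definition canon_height :: "int poly \<Rightarrow> int \<Rightarrow> ecpt \<Rightarrow> real" where
  "canon_height f d Q =
     (1/2) * lim (\<lambda>n. hx (((\<lambda>R. ec_add f d R R) ^^ n) Q) / 4 ^ n)"

end

theory Submission
  imports Defs
begin

definition discr :: "int \<Rightarrow> int \<Rightarrow> int \<Rightarrow> int \<Rightarrow> int" where
  "discr a b c e = b^2*c^2 - 4*a*c^3 - 4*b^3*e - 27*a^2*e^2 + 18*a*b*c*e"

definition Nq :: "int \<Rightarrow> int \<Rightarrow> int \<Rightarrow> int \<Rightarrow> int \<Rightarrow> int \<Rightarrow> int" where
  "Nq a b c e p q = a^2*p^4 - 2*a*c*p^2*q^2 - 8*a*e*p*q^3 + (c^2 - 4*b*e)*q^4"

definition Dq :: "int \<Rightarrow> int \<Rightarrow> int \<Rightarrow> int \<Rightarrow> int \<Rightarrow> int \<Rightarrow> int" where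
  "Dq a b c e p q = 4*a*q*(a*p^3 + b*p^2*q + c*p*q^2 + e*q^3)"

definition wA0 :: "int \<Rightarrow> int \<Rightarrow> int \<Rightarrow> int \<Rightarrow> int" where
  "wA0 a b c e = (2916*a^5*e^4 - 3888*a^4*b*c*e^3 + 864*a^4*c^3*e^2 + 864*a^3*b^3*e^3 + 1080*a^3*b^2*c^2*e^2 - 576*a^3*b*c^4*e + 64*a^3*c^6 - 576*a^2*b^4*c*e^2 + 272*a^2*b^3*c^3*e - 32*a^2*b^2*c^5 + 64*a*b^6*e^2 - 32*a*b^5*c^2*e + 4*a*b^4*c^4)"

definition wA1 :: "int \<Rightarrow> int \<Rightarrow> int \<Rightarrow> int \<Rightarrow> int" where
  "wA1 a b c e = (2160*a^4*b*e^4 - 108*a^4*c^2*e^3 - 2304*a^3*b^2*c*e^3 + 608*a^3*b*c^3*e^2 - 16*a^3*c^5*e + 320*a^2*b^4*e^3 + 480*a^2*b^3*c^2*e^2 - 268*a^2*b^2*c^4*e + 32*a^2*b*c^6 - 128*a*b^5*c*e^2 + 64*a*b^4*c^3*e - 8*a*b^3*c^5)"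

definition wA2 :: "int \<Rightarrow> int \<Rightarrow> int \<Rightarrow> int \<Rightarrow> int" where
  "wA2 a b c e = (2376*a^4*c*e^4 + 432*a^3*b^2*e^4 - 2988*a^3*b*c^2*e^3 + 676*a^3*c^4*e^2 + 64*a^2*b^3*c*e^3 + 912*a^2*b^2*c^3*e^2 - 424*a^2*b*c^5*e + 48*a^2*c^7 + 64*a*b^5*e^3 - 224*a*b^4*c^2*e^2 + 100*a*b^3*c^4*e - 12*a*b^2*c^6)"

definition wA3 :: "int \<Rightarrow> int \<Rightarrow> int \<Rightarrow> int \<Rightarrow> int" where
  "wA3 a b c e = (2592*a^4*e^5 - 3024*a^3*b*c*e^4 + 708*a^3*c^3*e^3 + 384*a^2*b^3*e^4 + 768*a^2*b^2*c^2*e^3 - 408*a^2*b*c^4*e^2 + 48*a^2*c^6*e - 192*a*b^4*c*e^3 + 96*a*b^3*c^3*e^2 - 12*a*b^2*c^5*e)"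

definition wA4 :: "int \<Rightarrow> int \<Rightarrow> int \<Rightarrow> int \<Rightarrow> int" where
  "wA4 a b c e = (- 540*a^4*b*e^4 + 27*a^4*c^2*e^3 + 576*a^3*b^2*c*e^3 - 152*a^3*b*c^3*e^2 + 4*a^3*c^5*e - 80*a^2*b^4*e^3 - 120*a^2*b^3*c^2*e^2 + 67*a^2*b^2*c^4*e - 8*a^2*b*c^6 + 32*a*b^5*c*e^2 - 16*a*b^4*c^3*e + 2*a*b^3*c^5)"

definition wA5 :: "int \<Rightarrow> int \<Rightarrow> int \<Rightarrow> int \<Rightarrow> int" where
  "wA5 a b c e = (864*a^4*c*e^4 + 432*a^3*b^2*e^4 - 1224*a^3*b*c^2*e^3 + 263*a^3*c^4*e^2 - 160*a^2*b^3*c*e^3 + 464*a^2*b^2*c^3*e^2 - 186*a^2*b*c^5*e + 20*a^2*c^7 + 64*a*b^5*e^3 - 112*a*b^4*c^2*e^2 + 44*a*b^3*c^4*e - 5*a*b^2*c^6)"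

definition wA6 :: "int \<Rightarrow> int \<Rightarrow> int \<Rightarrow> int \<Rightarrow> int" where
  "wA6 a b c e = (5184*a^4*e^5 - 6264*a^3*b*c*e^4 + 1470*a^3*c^3*e^3 + 1200*a^2*b^3*e^4 + 1464*a^2*b^2*c^2*e^3 - 857*a^2*b*c^4*e^2 + 104*a^2*c^6*e - 704*a*b^4*c*e^3 + 416*a*b^3*c^3*e^2 - 76*a*b^2*c^5*e + 4*a*b*c^7 + 64*b^6*e^3 - 48*b^5*c^2*e^2 + 12*b^4*c^4*e - 1*b^3*c^6)"

definition wA7 :: "int \<Rightarrow> int \<Rightarrow> int \<Rightarrow> int \<Rightarrow> int" where
  "wA7 a b c e = (2592*a^3*b*e^5 - 648*a^3*c^2*e^4 - 3024*a^2*b^2*c*e^4 + 1464*a^2*b*c^3*e^3 - 177*a^2*c^5*e^2 + 384*a*b^4*e^4 + 672*a*b^3*c^2*e^3 - 600*a*b^2*c^4*e^2 + 150*a*b*c^6*e - 12*a*c^8 - 192*b^5*c*e^3 + 144*b^4*c^3*e^2 - 36*b^3*c^5*e + 3*b^2*c^7)"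

definition wB0 :: "int \<Rightarrow> int \<Rightarrow> int \<Rightarrow> int \<Rightarrow> int" where
  "wB0 a b c e = 0"

definition wB1 :: "int \<Rightarrow> int \<Rightarrow> int \<Rightarrow> int \<Rightarrow> int" where
  "wB1 a b c e = (324*a^4*e^2 - 216*a^3*b*c*e + 48*a^3*c^3 + 48*a^2*b^3*e - 12*a^2*b^2*c^2)"

definition wB2 :: "int \<Rightarrow> int \<Rightarrow> int \<Rightarrow> int \<Rightarrow> int" where
  "wB2 a b c e = (216*a^3*b*e^2 - 144*a^2*b^2*c*e + 32*a^2*b*c^3 + 32*a*b^4*e - 8*a*b^3*c^2)"

definition wB3 :: "int \<Rightarrow> int \<Rightarrow> int \<Rightarrow> int \<Rightarrow> int" where
  "wB3 a b c e = (432*a^3*c*e^2 - 108*a^2*b^2*e^2 - 288*a^2*b*c^2*e + 64*a^2*c^4 + 136*a*b^3*c*e - 32*a*b^2*c^3 - 16*b^5*e + 4*b^4*c^2)"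

definition wB4 :: "int \<Rightarrow> int \<Rightarrow> int \<Rightarrow> int \<Rightarrow> int" where
  "wB4 a b c e = (- 81*a^4*e^2 + 54*a^3*b*c*e - 12*a^3*c^3 - 12*a^2*b^3*e + 3*a^2*b^2*c^2)"

definition wB5 :: "int \<Rightarrow> int \<Rightarrow> int \<Rightarrow> int \<Rightarrow> int" where
  "wB5 a b c e = (27*a^3*b*e^2 - 18*a^2*b^2*c*e + 4*a^2*b*c^3 + 4*a*b^4*e - 1*a*b^3*c^2)"

definition wB6 :: "int \<Rightarrow> int \<Rightarrow> int \<Rightarrow> int \<Rightarrow> int" where
  "wB6 a b c e = (135*a^3*c*e^2 - 90*a^2*b*c^2*e + 20*a^2*c^4 + 20*a*b^3*c*e - 5*a*b^2*c^3)"

definition wB7 :: "int \<Rightarrow> int \<Rightarrow> int \<Rightarrow> int \<Rightarrow> int" where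
  "wB7 a b c e = (729*a^3*e^3 - 540*a^2*b*c*e^2 + 108*a^2*c^3*e + 108*a*b^3*e^2 + 9*a*b^2*c^2*e - 8*a*b*c^4 - 8*b^4*c*e + 2*b^3*c^3)"

lemma identA:
  "(wA0 a b c e*p^3 + wA1 a b c e*p^2*q + wA2 a b c e*p*q^2 + wA3 a b c e*q^3) * Nq a b c e p q
   + (wA4 a b c e*p^3 + wA5 a b c e*p^2*q + wA6 a b c e*p*q^2 + wA7 a b c e*q^3) * Dq a b c e p q
   = 4*a^3*(discr a b c e)^2*p^7"
  unfolding wA0_def wA1_def wA2_def wA3_def wA4_def wA5_def wA6_def wA7_def Nq_def Dq_def discr_def
  by algebra

lemma identB:
  "(wB0 a b c e*p^3 + wB1 a b c e*p^2*q + wB2 a b c e*p*q^2 + wB3 a b c e*q^3) * Nq a b c e p q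
   + (wB4 a b c e*p^3 + wB5 a b c e*p^2*q + wB6 a b c e*p*q^2 + wB7 a b c e*q^3) * Dq a b c e p q
   = 4*(discr a b c e)^2*q^7"
  unfolding wB0_def wB1_def wB2_def wB3_def wB4_def wB5_def wB6_def wB7_def Nq_def Dq_def discr_def
  by algebra


lemma pow_le_M:
  fixes p q :: int
  shows "\<bar>p\<bar>^i * \<bar>q\<bar>^j \<le> (max \<bar>p\<bar> \<bar>q\<bar>)^(i+j)"
proof -
  have 1: "\<bar>p\<bar>^i \<le> (max \<bar>p\<bar> \<bar>q\<bar>)^i" by (rule power_mono) auto
  have 2: "\<bar>q\<bar>^j \<le> (max \<bar>p\<bar> \<bar>q\<bar>)^j" by (rule power_mono) auto
  have "\<bar>p\<bar>^i * \<bar>q\<bar>^j \<le> (max \<bar>p\<bar> \<bar>q\<bar>)^i * (max \<bar>p\<bar> \<bar>q\<bar>)^j"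
    by (rule mult_mono[OF 1 2]) simp_all
  thus ?thesis by (simp add: power_add)
qed

lemma term_le_M:
  fixes p q w :: int
  assumes "i + j = n"
  shows "\<bar>w * p^i * q^j\<bar> \<le> \<bar>w\<bar> * (max \<bar>p\<bar> \<bar>q\<bar>)^n"
proof -
  have "\<bar>w * p^i * q^j\<bar> = \<bar>w\<bar> * (\<bar>p\<bar>^i * \<bar>q\<bar>^j)" by (simp add: abs_mult power_abs)
  also have "\<dots> \<le> \<bar>w\<bar> * (max \<bar>p\<bar> \<bar>q\<bar>)^(i+j)" by (rule mult_left_mono[OF pow_le_M]) simp
  finally show ?thesis using assms by simp
qed

lemma abs_tri4:
  fixes x1 x2 x3 x4 :: int
  shows "\<bar>x1+x2+x3+x4\<bar> \<le> \<bar>x1\<bar>+\<bar>x2\<bar>+\<bar>x3\<bar>+\<bar>x4\<bar>"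
proof -
  have "\<bar>x1+x2+x3+x4\<bar> \<le> \<bar>x1+x2+x3\<bar>+\<bar>x4\<bar>" by (rule abs_triangle_ineq)
  moreover have "\<bar>x1+x2+x3\<bar> \<le> \<bar>x1+x2\<bar>+\<bar>x3\<bar>" by (rule abs_triangle_ineq)
  moreover have "\<bar>x1+x2\<bar> \<le> \<bar>x1\<bar>+\<bar>x2\<bar>" by (rule abs_triangle_ineq)
  ultimately show ?thesis by (smt (verit))
qed

lemma abs_tri5:
  fixes x1 x2 x3 x4 x5 :: int
  shows "\<bar>x1+x2+x3+x4+x5\<bar> \<le> \<bar>x1\<bar>+\<bar>x2\<bar>+\<bar>x3\<bar>+\<bar>x4\<bar>+\<bar>x5\<bar>"
proof -
  have "\<bar>x1+x2+x3+x4+x5\<bar> \<le> \<bar>x1+x2+x3+x4\<bar>+\<bar>x5\<bar>" by (rule abs_triangle_ineq)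
  moreover have "\<bar>x1+x2+x3+x4\<bar> \<le> \<bar>x1\<bar>+\<bar>x2\<bar>+\<bar>x3\<bar>+\<bar>x4\<bar>" by (rule abs_tri4)
  ultimately show ?thesis by (smt (verit))
qed

lemma cubic_bound:
  fixes p q w0 w1 w2 w3 :: int
  shows "\<bar>w0*p^3 + w1*p^2*q + w2*p*q^2 + w3*q^3\<bar> \<le> (\<bar>w0\<bar>+\<bar>w1\<bar>+\<bar>w2\<bar>+\<bar>w3\<bar>) * (max \<bar>p\<bar> \<bar>q\<bar>)^3"
proof -
  obtain M where M: "M = (max \<bar>p\<bar> \<bar>q\<bar>)^3" by blast
  have 1: "\<bar>w0*p^3\<bar> \<le> \<bar>w0\<bar> * M" using term_le_M[of 3 0 3 w0 p q] M by simp
  have 2: "\<bar>w1*p^2*q\<bar> \<le> \<bar>w1\<bar> * M" using term_le_M[of 2 1 3 w1 p q] M by simp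
  have 3: "\<bar>w2*p*q^2\<bar> \<le> \<bar>w2\<bar> * M" using term_le_M[of 1 2 3 w2 p q] M by simp
  have 4: "\<bar>w3*q^3\<bar> \<le> \<bar>w3\<bar> * M" using term_le_M[of 0 3 3 w3 p q] M by simp
  have 5: "(\<bar>w0\<bar>+\<bar>w1\<bar>+\<bar>w2\<bar>+\<bar>w3\<bar>) * M = \<bar>w0\<bar>*M+\<bar>w1\<bar>*M+\<bar>w2\<bar>*M+\<bar>w3\<bar>*M"
    by (simp add: distrib_right)
  have "\<bar>w0*p^3 + w1*p^2*q + w2*p*q^2 + w3*q^3\<bar> \<le> \<bar>w0*p^3\<bar> + \<bar>w1*p^2*q\<bar> + \<bar>w2*p*q^2\<bar> + \<bar>w3*q^3\<bar>"
    by (rule abs_tri4)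
  also have "\<dots> \<le> \<bar>w0\<bar>*M+\<bar>w1\<bar>*M+\<bar>w2\<bar>*M+\<bar>w3\<bar>*M"
    by (intro add_mono 1 2 3 4)
  finally show ?thesis by (simp only: M distrib_right)
qed

lemma quartic_bound:
  fixes p q w0 w1 w2 w3 w4 :: int
  shows "\<bar>w0*p^4 + w1*p^3*q + w2*p^2*q^2 + w3*p*q^3 + w4*q^4\<bar> \<le> (\<bar>w0\<bar>+\<bar>w1\<bar>+\<bar>w2\<bar>+\<bar>w3\<bar>+\<bar>w4\<bar>) * (max \<bar>p\<bar> \<bar>q\<bar>)^4"
proof -
  obtain M where M: "M = (max \<bar>p\<bar> \<bar>q\<bar>)^4" by blast
  have 1: "\<bar>w0*p^4\<bar> \<le> \<bar>w0\<bar> * M" using term_le_M[of 4 0 4 w0 p q] M by simp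
  have 2: "\<bar>w1*p^3*q\<bar> \<le> \<bar>w1\<bar> * M" using term_le_M[of 3 1 4 w1 p q] M by simp
  have 3: "\<bar>w2*p^2*q^2\<bar> \<le> \<bar>w2\<bar> * M" using term_le_M[of 2 2 4 w2 p q] M by simp
  have 4: "\<bar>w3*p*q^3\<bar> \<le> \<bar>w3\<bar> * M" using term_le_M[of 1 3 4 w3 p q] M by simp
  have 5: "\<bar>w4*q^4\<bar> \<le> \<bar>w4\<bar> * M" using term_le_M[of 0 4 4 w4 p q] M by simp
  have 6: "(\<bar>w0\<bar>+\<bar>w1\<bar>+\<bar>w2\<bar>+\<bar>w3\<bar>+\<bar>w4\<bar>) * M = \<bar>w0\<bar>*M+\<bar>w1\<bar>*M+\<bar>w2\<bar>*M+\<bar>w3\<bar>*M+\<bar>w4\<bar>*M"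
    by (simp add: distrib_right)
  have "\<bar>w0*p^4 + w1*p^3*q + w2*p^2*q^2 + w3*p*q^3 + w4*q^4\<bar> \<le> \<bar>w0*p^4\<bar> + \<bar>w1*p^3*q\<bar> + \<bar>w2*p^2*q^2\<bar> + \<bar>w3*p*q^3\<bar> + \<bar>w4*q^4\<bar>"
    by (rule abs_tri5)
  also have "\<dots> \<le> \<bar>w0\<bar>*M+\<bar>w1\<bar>*M+\<bar>w2\<bar>*M+\<bar>w3\<bar>*M+\<bar>w4\<bar>*M"
    by (intro add_mono 1 2 3 4 5)
  finally show ?thesis by (simp only: M distrib_right)
qed

definition SA :: "int \<Rightarrow> int \<Rightarrow> int \<Rightarrow> int \<Rightarrow> int" where
  "SA a b c e = \<bar>wA0 a b c e\<bar> + \<bar>wA1 a b c e\<bar> + \<bar>wA2 a b c e\<bar> + \<bar>wA3 a b c e\<bar>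
     + \<bar>wA4 a b c e\<bar> + \<bar>wA5 a b c e\<bar> + \<bar>wA6 a b c e\<bar> + \<bar>wA7 a b c e\<bar>"
definition SB :: "int \<Rightarrow> int \<Rightarrow> int \<Rightarrow> int \<Rightarrow> int" where
  "SB a b c e = \<bar>wB0 a b c e\<bar> + \<bar>wB1 a b c e\<bar> + \<bar>wB2 a b c e\<bar> + \<bar>wB3 a b c e\<bar>
     + \<bar>wB4 a b c e\<bar> + \<bar>wB5 a b c e\<bar> + \<bar>wB6 a b c e\<bar> + \<bar>wB7 a b c e\<bar>"
definition KU :: "int \<Rightarrow> int \<Rightarrow> int \<Rightarrow> int \<Rightarrow> int" where
  "KU a b c e = SA a b c e + \<bar>a\<bar>^3 * SB a b c e + 1"
definition KnN :: "int \<Rightarrow> int \<Rightarrow> int \<Rightarrow> int \<Rightarrow> int" where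
  "KnN a b c e = \<bar>a^2\<bar>+\<bar>0\<bar>+\<bar>-2*a*c\<bar>+\<bar>-8*a*e\<bar>+\<bar>c^2 - 4*b*e\<bar>"
definition KnD :: "int \<Rightarrow> int \<Rightarrow> int \<Rightarrow> int \<Rightarrow> int" where
  "KnD a b c e = \<bar>0\<bar>+\<bar>4*a^2\<bar>+\<bar>4*a*b\<bar>+\<bar>4*a*c\<bar>+\<bar>4*a*e\<bar>"
definition Kn :: "int \<Rightarrow> int \<Rightarrow> int \<Rightarrow> int \<Rightarrow> int" where
  "Kn a b c e = KnN a b c e + KnD a b c e + 1"

lemma Kn_ge: "KnN a b c e \<le> Kn a b c e" "KnD a b c e \<le> Kn a b c e" "1 \<le> Kn a b c e"
proof -
  have 1: "0 \<le> KnN a b c e" unfolding KnN_def by (intro add_nonneg_nonneg abs_ge_zero)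
  have 2: "0 \<le> KnD a b c e" unfolding KnD_def by (intro add_nonneg_nonneg abs_ge_zero)
  show "KnN a b c e \<le> Kn a b c e" "KnD a b c e \<le> Kn a b c e" "1 \<le> Kn a b c e"
    using 1 2 unfolding Kn_def by linarith+
qed

lemma ND_upper:
  fixes a b c e p q :: int
  shows "max \<bar>Nq a b c e p q\<bar> \<bar>Dq a b c e p q\<bar> \<le> Kn a b c e * (max \<bar>p\<bar> \<bar>q\<bar>)^4"
proof -
  let ?M = "(max \<bar>p\<bar> \<bar>q\<bar>)^4"
  have N: "Nq a b c e p q = a^2*p^4 + 0*p^3*q + (-2*a*c)*p^2*q^2 + (-8*a*e)*p*q^3 + (c^2 - 4*b*e)*q^4"
    unfolding Nq_def by algebra
  have D: "Dq a b c e p q = 0*p^4 + (4*a^2)*p^3*q + (4*a*b)*p^2*q^2 + (4*a*c)*p*q^3 + (4*a*e)*q^4"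
    unfolding Dq_def by algebra
  have n: "\<bar>Nq a b c e p q\<bar> \<le> KnN a b c e * ?M"
    unfolding N KnN_def by (rule quartic_bound)
  have d: "\<bar>Dq a b c e p q\<bar> \<le> KnD a b c e * ?M"
    unfolding D KnD_def by (rule quartic_bound)
  have M0: "0 \<le> ?M" by simp
  have l1: "KnN a b c e * ?M \<le> Kn a b c e * ?M" by (intro mult_right_mono M0 Kn_ge)
  have l2: "KnD a b c e * ?M \<le> Kn a b c e * ?M" by (intro mult_right_mono M0 Kn_ge)
  show ?thesis by (rule max.boundedI[OF order_trans[OF n l1] order_trans[OF d l2]])
qed

lemma abs_lin2:
  fixes U N V D :: int
  shows "\<bar>U*N + V*D\<bar> \<le> (\<bar>U\<bar> + \<bar>V\<bar>) * max \<bar>N\<bar> \<bar>D\<bar>"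
proof -
  have "\<bar>U*N + V*D\<bar> \<le> \<bar>U\<bar>*\<bar>N\<bar> + \<bar>V\<bar>*\<bar>D\<bar>"
    using abs_triangle_ineq[of "U*N" "V*D"] by (simp add: abs_mult)
  also have "\<dots> \<le> \<bar>U\<bar>*max \<bar>N\<bar> \<bar>D\<bar> + \<bar>V\<bar>*max \<bar>N\<bar> \<bar>D\<bar>"
    by (intro add_mono mult_left_mono) auto
  finally show ?thesis by (simp add: distrib_right)
qed

lemma ND_lower:
  fixes a b c e p q k :: int
  assumes cop: "coprime p q" and a: "a \<noteq> 0" and disc: "discr a b c e \<noteq> 0"
    and kN: "k dvd Nq a b c e p q" and kD: "k dvd Dq a b c e p q"
  shows "\<bar>k\<bar> \<le> \<bar>4*a^3*(discr a b c e)^2\<bar>"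
    and "\<bar>4*a^3*(discr a b c e)^2\<bar> * (max \<bar>p\<bar> \<bar>q\<bar>)^4 \<le> KU a b c e * max \<bar>Nq a b c e p q\<bar> \<bar>Dq a b c e p q\<bar>"
proof -
  define R where "R = 4*a^3*(discr a b c e)^2"
  define N where "N = Nq a b c e p q"
  define D where "D = Dq a b c e p q"
  define U1 where "U1 = wA0 a b c e*p^3 + wA1 a b c e*p^2*q + wA2 a b c e*p*q^2 + wA3 a b c e*q^3"
  define V1 where "V1 = wA4 a b c e*p^3 + wA5 a b c e*p^2*q + wA6 a b c e*p*q^2 + wA7 a b c e*q^3"
  define U2 where "U2 = wB0 a b c e*p^3 + wB1 a b c e*p^2*q + wB2 a b c e*p*q^2 + wB3 a b c e*q^3"
  define V2 where "V2 = wB4 a b c e*p^3 + wB5 a b c e*p^2*q + wB6 a b c e*p*q^2 + wB7 a b c e*q^3"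
  have iA: "U1*N + V1*D = R*p^7" unfolding U1_def V1_def N_def D_def R_def by (rule identA)
  have iB: "U2*N + V2*D = 4*(discr a b c e)^2*q^7" unfolding U2_def V2_def N_def D_def by (rule identB)
  have iB': "a^3*(U2*N + V2*D) = R*q^7" unfolding iB R_def by (simp add: algebra_simps)
  have R0: "R \<noteq> 0" unfolding R_def using a disc by simp
  have "k dvd R*p^7" unfolding iA[symmetric] using kN kD unfolding N_def D_def by simp
  moreover have "k dvd R*q^7" unfolding iB'[symmetric] using kN kD unfolding N_def D_def by simp
  ultimately have "k dvd gcd (R*p^7) (R*q^7)" by simp
  also have "gcd (R*p^7) (R*q^7) = \<bar>R\<bar> * gcd (p^7) (q^7)" by (rule gcd_mult_distrib_int[symmetric])
  also have "gcd (p^7) (q^7) = 1" using cop by simp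
  finally have "k dvd \<bar>R\<bar>" by simp
  then show "\<bar>k\<bar> \<le> \<bar>4*a^3*(discr a b c e)^2\<bar>" using R0 dvd_imp_le_int[of "\<bar>R\<bar>" k] by (simp add: R_def)
  define M where "M = max \<bar>p\<bar> \<bar>q\<bar>"
  define mx where "mx = max \<bar>N\<bar> \<bar>D\<bar>"
  have M1: "1 \<le> M"
  proof (rule ccontr)
    assume "\<not> 1 \<le> M"
    hence "p = 0" "q = 0" unfolding M_def by auto
    with cop show False by simp
  qed
  have mx0: "0 \<le> mx" unfolding mx_def by simp
  have bU1: "\<bar>U1\<bar> \<le> (\<bar>wA0 a b c e\<bar>+\<bar>wA1 a b c e\<bar>+\<bar>wA2 a b c e\<bar>+\<bar>wA3 a b c e\<bar>) * M^3"
    unfolding U1_def M_def by (rule cubic_bound)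
  have bV1: "\<bar>V1\<bar> \<le> (\<bar>wA4 a b c e\<bar>+\<bar>wA5 a b c e\<bar>+\<bar>wA6 a b c e\<bar>+\<bar>wA7 a b c e\<bar>) * M^3"
    unfolding V1_def M_def by (rule cubic_bound)
  have bU2: "\<bar>U2\<bar> \<le> (\<bar>wB0 a b c e\<bar>+\<bar>wB1 a b c e\<bar>+\<bar>wB2 a b c e\<bar>+\<bar>wB3 a b c e\<bar>) * M^3"
    unfolding U2_def M_def by (rule cubic_bound)
  have bV2: "\<bar>V2\<bar> \<le> (\<bar>wB4 a b c e\<bar>+\<bar>wB5 a b c e\<bar>+\<bar>wB6 a b c e\<bar>+\<bar>wB7 a b c e\<bar>) * M^3"
    unfolding V2_def M_def by (rule cubic_bound)
  have sA: "\<bar>U1\<bar> + \<bar>V1\<bar> \<le> SA a b c e * M^3"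
    using add_mono[OF bU1 bV1] unfolding SA_def by (simp add: algebra_simps)
  have sB: "\<bar>U2\<bar> + \<bar>V2\<bar> \<le> SB a b c e * M^3"
    using add_mono[OF bU2 bV2] unfolding SB_def by (simp add: algebra_simps)
  have p7: "\<bar>R\<bar> * \<bar>p\<bar>^7 \<le> SA a b c e * M^3 * mx"
  proof -
    have "\<bar>R\<bar> * \<bar>p\<bar>^7 = \<bar>U1*N + V1*D\<bar>" unfolding iA by (simp add: abs_mult power_abs)
    also have "\<dots> \<le> (\<bar>U1\<bar> + \<bar>V1\<bar>) * mx" unfolding mx_def by (rule abs_lin2)
    also have "\<dots> \<le> SA a b c e * M^3 * mx" by (rule mult_right_mono[OF sA mx0])
    finally show ?thesis .
  qed
  have q7: "\<bar>R\<bar> * \<bar>q\<bar>^7 \<le> \<bar>a\<bar>^3 * SB a b c e * M^3 * mx"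
  proof -
    have "\<bar>R\<bar> * \<bar>q\<bar>^7 = \<bar>R*q^7\<bar>" by (simp add: abs_mult power_abs)
    also have "\<dots> = \<bar>a^3*(U2*N + V2*D)\<bar>" using iB' by simp
    also have "\<dots> = \<bar>a\<bar>^3 * \<bar>U2*N + V2*D\<bar>" by (simp add: abs_mult power_abs)
    also have "\<bar>U2*N + V2*D\<bar> \<le> (\<bar>U2\<bar> + \<bar>V2\<bar>) * mx" unfolding mx_def by (rule abs_lin2)
    also have "\<dots> \<le> SB a b c e * M^3 * mx" by (rule mult_right_mono[OF sB mx0])
    finally show ?thesis by (simp add: mult_left_mono mult.assoc)
  qed
  have SAnn: "0 \<le> SA a b c e" unfolding SA_def by (intro add_nonneg_nonneg abs_ge_zero)
  have SBnn: "0 \<le> SB a b c e" unfolding SB_def by (intro add_nonneg_nonneg abs_ge_zero)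
  have M7: "\<bar>R\<bar> * M^7 \<le> KU a b c e * M^3 * mx"
  proof -
    have M3mx: "0 \<le> M^3 * mx" using M1 mx0 by simp
    have A: "SA a b c e * M^3 * mx \<le> KU a b c e * M^3 * mx"
      using mult_right_mono[OF _ M3mx, of "SA a b c e" "KU a b c e"] SBnn unfolding KU_def
      by (simp add: mult.assoc)
    have B: "\<bar>a\<bar>^3 * SB a b c e * M^3 * mx \<le> KU a b c e * M^3 * mx"
      using mult_right_mono[OF _ M3mx, of "\<bar>a\<bar>^3 * SB a b c e" "KU a b c e"] SAnn unfolding KU_def
      by (simp add: mult.assoc)
    have "M^7 = \<bar>p\<bar>^7 \<or> M^7 = \<bar>q\<bar>^7" unfolding M_def by (simp add: max_def)
    thus ?thesis using p7 q7 A B by auto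
  qed
  have "M^7 = M^3 * M^4" by (simp add: power_add[symmetric])
  hence "M^3 * (\<bar>R\<bar> * M^4) \<le> M^3 * (KU a b c e * mx)" using M7 by (simp add: algebra_simps)
  hence "\<bar>R\<bar> * M^4 \<le> KU a b c e * mx" using M1 by (simp add: mult_le_cancel_left)
  thus "\<bar>4*a^3*(discr a b c e)^2\<bar> * (max \<bar>p\<bar> \<bar>q\<bar>)^4 \<le> KU a b c e * max \<bar>Nq a b c e p q\<bar> \<bar>Dq a b c e p q\<bar>"
    unfolding R_def M_def mx_def N_def D_def .
qed

lemma quot_scale:
  fixes N D :: int and r :: rat
  assumes D: "D \<noteq> 0" and r: "r = of_int N / of_int D" and qo: "quotient_of r = (p', q')"
  shows "\<exists>k. N = k*p' \<and> D = k*q' \<and> k \<noteq> 0"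
proof -
  have q0: "q' > 0" using quotient_of_denom_pos[OF qo] .
  have cop: "coprime p' q'" using quotient_of_coprime[OF qo] .
  have rr: "r = of_int p' / of_int q'" using quotient_of_div[OF qo] .
  have "of_int N / of_int D = (of_int p' / of_int q' :: rat)" using r rr by simp
  hence "of_int (N * q') = (of_int (p' * D) :: rat)" using D q0 by (simp add: field_simps)
  hence eq: "N * q' = p' * D" by linarith
  hence "q' dvd p' * D" by (metis dvd_triv_right)
  hence "q' dvd D" using cop by (metis coprime_commute coprime_dvd_mult_left_iff coprime_dvd_mult_right_iff)
  then obtain k where k: "D = q' * k" by (auto elim: dvdE)
  have "N * q' = (k * p') * q'" using eq k by (simp add: algebra_simps)
  hence "N = k * p'" using q0 by simp
  moreover have "k \<noteq> 0" using k D by auto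
  ultimately show ?thesis using k by (auto simp: algebra_simps)
qed

lemma hx_Pt: "hx (Pt r y) = ln (real_of_int (max \<bar>fst (quotient_of r)\<bar> \<bar>snd (quotient_of r)\<bar>))"
  by (cases "quotient_of r") simp

lemma hx_ge1: "1 \<le> max \<bar>fst (quotient_of r)\<bar> \<bar>snd (quotient_of r)\<bar>"
proof (cases "quotient_of r")
  case (Pair p q)
  then have "q > 0" using quotient_of_denom_pos by blast
  then show ?thesis using Pair by simp
qed

lemma hx_nonneg: "0 \<le> hx P"
proof (cases P)
  case Zero_pt then show ?thesis by simp
next
  case (Pt r y)
  have "(1::real) \<le> real_of_int (max \<bar>fst (quotient_of r)\<bar> \<bar>snd (quotient_of r)\<bar>)"
    using hx_ge1[of r] by linarith
  then show ?thesis unfolding Pt hx_Pt by simp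
qed

lemma hx_int: "hx (Pt (of_int n) y) = ln (real_of_int (max \<bar>n\<bar> 1))"
  by (simp add: quotient_of_int)

lemma KU_ge1: "1 \<le> KU a b c e"
proof -
  have "0 \<le> SA a b c e" unfolding SA_def by (intro add_nonneg_nonneg abs_ge_zero)
  moreover have "0 \<le> \<bar>a\<bar>^3 * SB a b c e" unfolding SB_def by (intro mult_nonneg_nonneg add_nonneg_nonneg abs_ge_zero) simp
  ultimately show ?thesis unfolding KU_def by linarith
qed

definition Kd :: "int \<Rightarrow> int \<Rightarrow> int \<Rightarrow> int \<Rightarrow> real" where
  "Kd a b c e = ln (real_of_int (Kn a b c e)) + ln (real_of_int (KU a b c e))"

lemma height_phi:
  fixes a b c e p q :: int and x r :: rat
  assumes qo: "quotient_of x = (p, q)" and a: "a \<noteq> 0" and disc: "discr a b c e \<noteq> 0"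
    and D0: "Dq a b c e p q \<noteq> 0"
    and r: "r = of_int (Nq a b c e p q) / of_int (Dq a b c e p q)"
  shows "\<bar>hx (Pt r y') - 4 * hx (Pt x y)\<bar> \<le> Kd a b c e"
proof -
  define N where "N = Nq a b c e p q"
  define D where "D = Dq a b c e p q"
  obtain p' q' where qo': "quotient_of r = (p', q')" by (cases "quotient_of r") auto
  obtain k where k: "N = k*p'" "D = k*q'" "k \<noteq> 0"
    using quot_scale[OF D0 r qo'] unfolding N_def D_def by blast
  have cop: "coprime p q" using quotient_of_coprime[OF qo] .
  have kR: "\<bar>k\<bar> \<le> \<bar>4*a^3*(discr a b c e)^2\<bar>"
    using ND_lower(1)[OF cop a disc, of k] k unfolding N_def D_def by simp
  have low: "\<bar>4*a^3*(discr a b c e)^2\<bar> * (max \<bar>p\<bar> \<bar>q\<bar>)^4 \<le> KU a b c e * max \<bar>N\<bar> \<bar>D\<bar>"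
    using ND_lower(2)[OF cop a disc, of k] k unfolding N_def D_def by simp
  have up: "max \<bar>N\<bar> \<bar>D\<bar> \<le> Kn a b c e * (max \<bar>p\<bar> \<bar>q\<bar>)^4"
    unfolding N_def D_def by (rule ND_upper)
  define M where "M = max \<bar>p\<bar> \<bar>q\<bar>"
  define mq where "mq = max \<bar>p'\<bar> \<bar>q'\<bar>"
  have mxk: "max \<bar>N\<bar> \<bar>D\<bar> = \<bar>k\<bar> * mq" unfolding k mq_def by (simp add: abs_mult max_mult_distrib_left)
  have mq1: "1 \<le> mq" using hx_ge1[of r] qo' unfolding mq_def by simp
  have M1: "1 \<le> M" using hx_ge1[of x] qo unfolding M_def by simp
  have hr: "hx (Pt r y') = ln (real_of_int mq)" using hx_Pt[of r y'] qo' unfolding mq_def by simp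
  have hxx: "hx (Pt x y) = ln (real_of_int M)" using hx_Pt[of x y] qo unfolding M_def by simp
  have Rpos: "0 < \<bar>4*a^3*(discr a b c e)^2\<bar>" using a disc by simp
  have k1: "1 \<le> \<bar>k\<bar>" using k(3) by linarith
  have "mq \<le> \<bar>k\<bar> * mq" using k1 mq1 by (simp add: mult_le_cancel_right1)
  hence u: "mq \<le> Kn a b c e * M^4" using up mxk unfolding M_def by linarith
  have "\<bar>4*a^3*(discr a b c e)^2\<bar> * M^4 \<le> KU a b c e * (\<bar>k\<bar> * mq)" using low mxk unfolding M_def by simp
  also have "\<dots> \<le> KU a b c e * (\<bar>4*a^3*(discr a b c e)^2\<bar> * mq)"
    using kR mq1 KU_ge1[of a b c e] by (intro mult_left_mono mult_right_mono) auto
  finally have "\<bar>4*a^3*(discr a b c e)^2\<bar> * M^4 \<le> \<bar>4*a^3*(discr a b c e)^2\<bar> * (KU a b c e * mq)"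
    by (simp add: algebra_simps)
  hence l: "M^4 \<le> KU a b c e * mq" using Rpos by (simp add: mult_le_cancel_left)
  have Kn1: "1 \<le> Kn a b c e" by (rule Kn_ge)
  have KU1: "1 \<le> KU a b c e" by (rule KU_ge1)
  have rM: "(1::real) \<le> real_of_int M" using M1 by simp
  have rmq: "(1::real) \<le> real_of_int mq" using mq1 by simp
  have rKn: "(1::real) \<le> real_of_int (Kn a b c e)" using Kn1 by simp
  have rKU: "(1::real) \<le> real_of_int (KU a b c e)" using KU1 by simp
  have u': "real_of_int mq \<le> real_of_int (Kn a b c e) * real_of_int M ^ 4"
    using u by (metis of_int_le_iff of_int_mult of_int_power)
  have l': "real_of_int M ^ 4 \<le> real_of_int (KU a b c e) * real_of_int mq"
    using l by (metis of_int_le_iff of_int_mult of_int_power)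
  have lnu: "ln (real_of_int mq) \<le> ln (real_of_int (Kn a b c e)) + 4 * ln (real_of_int M)"
  proof -
    have "ln (real_of_int mq) \<le> ln (real_of_int (Kn a b c e) * real_of_int M ^ 4)"
      using u' rmq by (intro ln_mono) auto
    also have "\<dots> = ln (real_of_int (Kn a b c e)) + 4 * ln (real_of_int M)"
      using rKn rM by (simp add: ln_mult ln_realpow)
    finally show ?thesis .
  qed
  have lnl: "4 * ln (real_of_int M) \<le> ln (real_of_int (KU a b c e)) + ln (real_of_int mq)"
  proof -
    have "4 * ln (real_of_int M) = ln (real_of_int M ^ 4)" using rM by (simp add: ln_realpow)
    also have "\<dots> \<le> ln (real_of_int (KU a b c e) * real_of_int mq)"
      using l' rM by (intro ln_mono) auto
    also have "\<dots> = ln (real_of_int (KU a b c e)) + ln (real_of_int mq)"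
      using rKU rmq by (simp add: ln_mult)
    finally show ?thesis .
  qed
  have "0 \<le> ln (real_of_int (Kn a b c e))" "0 \<le> ln (real_of_int (KU a b c e))" using rKn rKU by simp_all
  then show ?thesis unfolding hr hxx Kd_def using lnu lnl by linarith
qed

lemma tangent_alg:
  fixes a b c e d x y l x3 :: rat
  assumes he: "d*y^2 = a*x^3 + b*x^2 + c*x + e"
    and hl: "2*d*y*l = 3*a*x^2 + 2*b*x + c"
    and hx3: "a*x3 = d*l^2 - b - 2*a*x"
  shows "d*(l*(x-x3) - y)^2 = a*x3^3 + b*x3^2 + c*x3 + e"
  using assms by algebra

lemma chord_alg:
  fixes a b c e d x1 y1 x2 y2 l x3 :: rat
  assumes he1: "d*y1^2 = a*x1^3 + b*x1^2 + c*x1 + e"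
    and he2: "d*y2^2 = a*x2^3 + b*x2^2 + c*x2 + e"
    and hl: "l*(x2-x1) = y2 - y1"
    and hx3: "a*x3 = d*l^2 - b - a*x1 - a*x2"
  shows "(x2-x1)*(d*(l*(x1-x3) - y1)^2 - (a*x3^3 + b*x3^2 + c*x3 + e)) = 0"
  using assms by algebra

lemma f_explicit:
  fixes f :: "int poly"
  assumes "degree f = 3"
  shows "f = [:coeff f 0, coeff f 1, coeff f 2, coeff f 3:]"
  using assms by (intro poly_eqI) (auto simp: coeff_pCons coeff_eq_0 numeral_2_eq_2 numeral_3_eq_3 split: nat.split)

lemma seq_lim:
  fixes s :: "nat \<Rightarrow> real" and K :: real
  assumes step: "\<And>n. \<bar>s (Suc n) - 4 * s n\<bar> \<le> K"
  shows "(\<lambda>n. s n / 4^n) \<longlonglongrightarrow> lim (\<lambda>n. s n / 4^n)"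
    and "\<bar>lim (\<lambda>n. s n / 4^n) - s 0\<bar> \<le> K / 3"
proof -
  define t where "t n = s n / 4^n" for n
  define dd where "dd n = t (Suc n) - t n" for n
  define g where "g n = (K/4) * (1/4)^n" for n
  have dd_bound: "\<bar>dd n\<bar> \<le> g n" for n
  proof -
    have "dd n = (s (Suc n) - 4 * s n) / 4^(Suc n)" unfolding dd_def t_def by (simp add: field_simps)
    hence "\<bar>dd n\<bar> = \<bar>s (Suc n) - 4 * s n\<bar> / 4^(Suc n)" by simp
    also have "\<dots> \<le> K / 4^(Suc n)" by (intro divide_right_mono step) simp
    also have "\<dots> = g n" unfolding g_def by (simp add: field_simps power_divide)
    finally show ?thesis .
  qed
  have sg: "summable g" unfolding g_def by (intro summable_mult summable_geometric) simp
  have sd: "summable dd" by (rule summable_comparison_test[OF _ sg]) (use dd_bound in auto)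
  have tsum: "t n = s 0 + (\<Sum>k<n. dd k)" for n
    unfolding dd_def using sum_lessThan_telescope[of t n] by (simp add: t_def)
  have lim1: "t \<longlonglongrightarrow> s 0 + suminf dd"
  proof -
    have "(\<lambda>n. s 0 + (\<Sum>k<n. dd k)) \<longlonglongrightarrow> s 0 + suminf dd"
      by (intro tendsto_add tendsto_const summable_LIMSEQ sd)
    moreover have "t = (\<lambda>n. s 0 + (\<Sum>k<n. dd k))" using tsum by (intro ext) simp
    ultimately show ?thesis by simp
  qed
  have L: "lim t = s 0 + suminf dd" by (rule limI[OF lim1])
  show "(\<lambda>n. s n / 4^n) \<longlonglongrightarrow> lim (\<lambda>n. s n / 4^n)"
    using lim1 L unfolding t_def[abs_def] by simp
  have gsum: "suminf g = K/3"
  proof -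
    have "suminf g = (K/4) * (\<Sum>n. (1/4::real)^n)" unfolding g_def
      by (rule suminf_mult) (rule summable_geometric, simp)
    also have "(\<Sum>n. (1/4::real)^n) = 4/3" by (subst suminf_geometric) simp_all
    finally show ?thesis by simp
  qed
  have u1: "dd n \<le> g n" for n using dd_bound[of n] by (simp add: abs_le_iff)
  have u2: "- g n \<le> dd n" for n using dd_bound[of n] by (simp add: abs_le_iff)
  have "suminf dd \<le> suminf g" by (rule suminf_le[OF u1 sd sg])
  moreover have "suminf (\<lambda>n. - g n) \<le> suminf dd"
    by (rule suminf_le[OF u2 summable_minus[OF sg] sd])
  moreover have "suminf (\<lambda>n. - g n) = - suminf g" by (rule suminf_minus[OF sg])
  ultimately have "\<bar>suminf dd\<bar> \<le> K/3" using gsum by linarith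
  thus "\<bar>lim (\<lambda>n. s n / 4^n) - s 0\<bar> \<le> K / 3" using L unfolding t_def[abs_def] by simp
qed


definition Fr :: "int \<Rightarrow> int \<Rightarrow> int \<Rightarrow> int \<Rightarrow> rat \<Rightarrow> rat" where
  "Fr a b c e x = of_int a * x^3 + of_int b * x^2 + of_int c * x + of_int e"

lemma fq_eq: "map_poly (of_int :: int \<Rightarrow> rat) [:e,c,b,a:] = [:of_int e, of_int c, of_int b, of_int a:]"
  by (simp add: map_poly_pCons)

lemma fq_poly: "poly (map_poly (of_int :: int \<Rightarrow> rat) [:e,c,b,a:]) x = Fr a b c e x"
  unfolding fq_eq Fr_def by (simp add: algebra_simps power2_eq_square power3_eq_cube)

lemma fq_coeff2: "coeff (map_poly (of_int :: int \<Rightarrow> rat) [:e,c,b,a:]) 2 = of_int b"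
  unfolding fq_eq by (simp add: numeral_2_eq_2)

lemma fq_coeff3: "coeff (map_poly (of_int :: int \<Rightarrow> rat) [:e,c,b,a:]) 3 = of_int a"
  unfolding fq_eq by (simp add: numeral_3_eq_3)

lemma fq_deriv: "poly (pderiv (map_poly (of_int :: int \<Rightarrow> rat) [:e,c,b,a:])) x
   = 3 * of_int a * x^2 + 2 * of_int b * x + of_int c"
  unfolding fq_eq by (simp add: pderiv_pCons algebra_simps power2_eq_square)

lemma on_curve_Pt: "on_curve [:e,c,b,a:] d (Pt x y) \<longleftrightarrow> of_int d * y^2 = Fr a b c e x"
  unfolding on_curve_def by (simp add: fq_poly)

lemma ec_add_expl:
  "ec_add [:e,c,b,a:] d (Pt x1 y1) (Pt x2 y2) =
     (if x1 = x2 \<and> y1 + y2 = 0 then Zero_pt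
      else (let l = (if x1 = x2 then (3 * of_int a * x1^2 + 2 * of_int b * x1 + of_int c) / (2 * of_int d * y1)
                     else (y2 - y1) / (x2 - x1));
                x3 = (of_int d * l^2 - of_int b) / of_int a - x1 - x2;
                y3 = l * (x1 - x3) - y1
            in Pt x3 y3))"
  by (simp add: fq_coeff2 fq_coeff3 fq_deriv Let_def)

lemma dbl_x3:
  fixes a b c e p q :: int and x x3 dl2 :: rat
  assumes a: "a \<noteq> 0" and qo: "quotient_of x = (p, q)" and F0: "Fr a b c e x \<noteq> 0"
    and dl: "4 * Fr a b c e x * dl2 = (3 * of_int a * x^2 + 2 * of_int b * x + of_int c)^2"
    and x3: "x3 = (dl2 - of_int b) / of_int a - x - x"
  shows "Dq a b c e p q \<noteq> 0" and "x3 = of_int (Nq a b c e p q) / of_int (Dq a b c e p q)"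
proof -
  have q0: "q > 0" using quotient_of_denom_pos[OF qo] .
  have hx: "x = of_int p / of_int q" using quotient_of_div[OF qo] .
  have qr: "(of_int q :: rat) \<noteq> 0" using q0 by simp
  have D: "(of_int (Dq a b c e p q) :: rat) = 4 * of_int a * of_int q^4 * Fr a b c e x"
    unfolding Dq_def Fr_def hx using qr by (simp add: field_simps power2_eq_square power3_eq_cube power4_eq_xxxx)
  have N: "(of_int (Nq a b c e p q) :: rat) = of_int q^4 *
      ((3 * of_int a * x^2 + 2 * of_int b * x + of_int c)^2 - 4 * of_int b * Fr a b c e x - 8 * of_int a * x * Fr a b c e x)"
    unfolding Nq_def Fr_def hx using qr by (simp add: field_simps power2_eq_square power3_eq_cube power4_eq_xxxx)
  have ar: "(of_int a :: rat) \<noteq> 0" using a by simp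
  have ax3: "of_int a * x3 = dl2 - of_int b - 2 * of_int a * x" using x3 ar by (simp add: field_simps)
  have key: "4 * of_int a * Fr a b c e x * x3 =
     (3 * of_int a * x^2 + 2 * of_int b * x + of_int c)^2 - 4 * of_int b * Fr a b c e x - 8 * of_int a * x * Fr a b c e x"
  proof -
    have "4 * of_int a * Fr a b c e x * x3 = 4 * Fr a b c e x * (of_int a * x3)" by (simp add: algebra_simps)
    also have "\<dots> = 4 * Fr a b c e x * dl2 - 4 * of_int b * Fr a b c e x - 8 * of_int a * x * Fr a b c e x"
      unfolding ax3 by (simp add: algebra_simps)
    finally show ?thesis unfolding dl .
  qed
  have Dr: "(of_int (Dq a b c e p q) :: rat) \<noteq> 0" unfolding D using ar qr F0 by simp
  then show "Dq a b c e p q \<noteq> 0" by simp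
  have "x3 * of_int (Dq a b c e p q) = of_int (Nq a b c e p q)"
    unfolding D N key[symmetric] by (simp add: algebra_simps)
  then show "x3 = of_int (Nq a b c e p q) / of_int (Dq a b c e p q)" using Dr by (simp add: field_simps)
qed

definition Kr :: "int \<Rightarrow> int \<Rightarrow> int \<Rightarrow> int \<Rightarrow> real" where
  "Kr a b c e = (\<Sum>r\<in>{r. Fr a b c e r = 0}. hx (Pt r 0))"

definition K0 :: "int \<Rightarrow> int \<Rightarrow> int \<Rightarrow> int \<Rightarrow> real" where
  "K0 a b c e = max (Kd a b c e) (4 * Kr a b c e)"

lemma roots_finite:
  assumes "a \<noteq> 0"
  shows "finite {r. Fr a b c e r = 0}"
proof -
  have "map_poly (of_int :: int \<Rightarrow> rat) [:e,c,b,a:] \<noteq> 0" using assms unfolding fq_eq by simp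
  from poly_roots_finite[OF this] show ?thesis unfolding fq_poly .
qed

lemma Kr_bound:
  assumes "a \<noteq> 0" and "Fr a b c e r = 0"
  shows "hx (Pt r y) \<le> Kr a b c e"
proof -
  have "hx (Pt r y) = hx (Pt r 0)" by (simp add: hx_Pt)
  also have "\<dots> \<le> Kr a b c e" unfolding Kr_def
    by (rule member_le_sum) (use assms in \<open>auto intro: hx_nonneg roots_finite simp del: hx.simps\<close>)
  finally show ?thesis .
qed

lemma Kd_nonneg: "0 \<le> Kd a b c e"
proof -
  have "(1::real) \<le> real_of_int (Kn a b c e)" using Kn_ge(3)[of a b c e] by simp
  moreover have "(1::real) \<le> real_of_int (KU a b c e)" using KU_ge1[of a b c e] by simp
  ultimately show ?thesis unfolding Kd_def by simp
qed

lemma K0_nonneg: "0 \<le> K0 a b c e"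
  using Kd_nonneg[of a b c e] by (simp add: K0_def le_max_iff_disj)

lemma dbl_step:
  fixes a b c e d :: int and P :: ecpt
  defines "F \<equiv> [:e,c,b,a:]"
  assumes a: "a \<noteq> 0" and d: "d \<noteq> 0" and disc: "discr a b c e \<noteq> 0" and P: "on_curve F d P"
  shows "on_curve F d (ec_add F d P P)" and "\<bar>hx (ec_add F d P P) - 4 * hx P\<bar> \<le> K0 a b c e"
proof -
  have "on_curve F d (ec_add F d P P) \<and> \<bar>hx (ec_add F d P P) - 4 * hx P\<bar> \<le> K0 a b c e"
  proof (cases P)
    case Zero_pt
    then show ?thesis using K0_nonneg[of a b c e] by (simp add: on_curve_def)
  next
    case (Pt x y)
    have cur: "of_int d * y^2 = Fr a b c e x" using P unfolding Pt F_def on_curve_Pt .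
    show ?thesis
    proof (cases "y = 0")
      case True
      have res: "ec_add F d P P = Zero_pt" unfolding Pt F_def ec_add_expl using True by simp
      have "Fr a b c e x = 0" using cur True by simp
      hence "hx P \<le> Kr a b c e" unfolding Pt by (rule Kr_bound[OF a])
      moreover have "0 \<le> hx P" by (rule hx_nonneg)
      ultimately show ?thesis unfolding res K0_def by (simp add: on_curve_def)
    next
      case False
      define l where "l = (3 * of_int a * x^2 + 2 * of_int b * x + of_int c) / (2 * of_int d * y)"
      define x3 where "x3 = (of_int d * l^2 - of_int b) / of_int a - x - x"
      define y3 where "y3 = l * (x - x3) - y"
      have res: "ec_add F d P P = Pt x3 y3"
        unfolding Pt F_def ec_add_expl using False by (simp add: Let_def l_def x3_def y3_def)
      have dr: "(of_int d :: rat) \<noteq> 0" using d by simp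
      have ar: "(of_int a :: rat) \<noteq> 0" using a by simp
      have hl: "2 * of_int d * y * l = 3 * of_int a * x^2 + 2 * of_int b * x + of_int c"
        unfolding l_def using dr False by (simp add: field_simps)
      have hx3: "of_int a * x3 = of_int d * l^2 - of_int b - 2 * of_int a * x"
        unfolding x3_def using ar by (simp add: field_simps)
      have oc: "of_int d * y3^2 = Fr a b c e x3"
        unfolding y3_def Fr_def
        by (rule tangent_alg[OF cur[unfolded Fr_def] hl hx3])
      have "of_int d * y^2 \<noteq> 0" using False dr by simp
      hence F0: "Fr a b c e x \<noteq> 0" using cur by simp
      have dl: "4 * Fr a b c e x * (of_int d * l^2) = (3 * of_int a * x^2 + 2 * of_int b * x + of_int c)^2"
      proof -
        have "4 * Fr a b c e x * (of_int d * l^2) = (2 * of_int d * y * l)^2"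
          unfolding cur[symmetric] by (simp add: algebra_simps power2_eq_square)
        thus ?thesis unfolding hl .
      qed
      obtain p q where qo: "quotient_of x = (p, q)" by (cases "quotient_of x") auto
      have D0: "Dq a b c e p q \<noteq> 0" by (rule dbl_x3(1)[OF a qo F0 dl x3_def])
      have x3e: "x3 = of_int (Nq a b c e p q) / of_int (Dq a b c e p q)" by (rule dbl_x3(2)[OF a qo F0 dl x3_def])
      have hb: "\<bar>hx (Pt x3 y3) - 4 * hx (Pt x y)\<bar> \<le> Kd a b c e"
        by (rule height_phi[OF qo a disc D0 x3e])
      have c1: "on_curve F d (Pt x3 y3)" using oc unfolding F_def on_curve_Pt .
      have c2: "\<bar>hx (Pt x3 y3) - 4 * hx P\<bar> \<le> K0 a b c e"
        unfolding K0_def Pt by (rule order_trans[OF hb max.cobounded1])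
      show ?thesis unfolding res using c1 c2 by blast
    qed
  qed
  thus "on_curve F d (ec_add F d P P)" and "\<bar>hx (ec_add F d P P) - 4 * hx P\<bar> \<le> K0 a b c e" by auto
qed

lemma canon_bound:
  fixes a b c e d :: int and P :: ecpt
  defines "F \<equiv> [:e,c,b,a:]"
  assumes a: "a \<noteq> 0" and d: "d \<noteq> 0" and disc: "discr a b c e \<noteq> 0" and P: "on_curve F d P"
  shows "\<bar>2 * canon_height F d P - hx P\<bar> \<le> K0 a b c e / 3"
proof -
  define T where "T = (\<lambda>R. ec_add F d R R)"
  have onc: "on_curve F d ((T^^n) P)" for n
  proof (induction n)
    case 0
    then show ?case using P by simp
  next
    case (Suc n)
    then show ?case using dbl_step(1)[OF a d disc, of "(T^^n) P"] unfolding F_def T_def by simp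
  qed
  have st: "\<bar>hx ((T^^(Suc n)) P) - 4 * hx ((T^^n) P)\<bar> \<le> K0 a b c e" for n
    using dbl_step(2)[OF a d disc, of "(T^^n) P"] onc[of n] unfolding F_def T_def by simp
  have "\<bar>lim (\<lambda>n. hx ((T^^n) P) / 4^n) - hx ((T^^0) P)\<bar> \<le> K0 a b c e / 3"
    by (rule seq_lim(2)[of "\<lambda>n. hx ((T^^n) P)", OF st])
  moreover have "2 * canon_height F d P = lim (\<lambda>n. hx ((T^^n) P) / 4^n)"
    unfolding canon_height_def T_def by simp
  ultimately show ?thesis by simp
qed

lemma chord_on_curve:
  fixes a b c e d :: int and x1 y1 x2 y2 :: rat
  assumes a: "a \<noteq> 0" and ne: "x1 \<noteq> x2"
    and P1: "of_int d * y1^2 = Fr a b c e x1" and P2: "of_int d * y2^2 = Fr a b c e x2"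
  shows "on_curve [:e,c,b,a:] d (ec_add [:e,c,b,a:] d (Pt x1 y1) (Pt x2 y2))"
proof -
  define l where "l = (y2 - y1) / (x2 - x1)"
  define x3 where "x3 = (of_int d * l^2 - of_int b) / of_int a - x1 - x2"
  define y3 where "y3 = l * (x1 - x3) - y1"
  have res: "ec_add [:e,c,b,a:] d (Pt x1 y1) (Pt x2 y2) = Pt x3 y3"
    unfolding ec_add_expl using ne by (simp add: Let_def l_def x3_def y3_def)
  have ar: "(of_int a :: rat) \<noteq> 0" using a by simp
  have nz: "x2 - x1 \<noteq> 0" using ne by simp
  have hl: "l * (x2 - x1) = y2 - y1" unfolding l_def using nz by simp
  have hx3: "of_int a * x3 = of_int d * l^2 - of_int b - of_int a * x1 - of_int a * x2"
    unfolding x3_def using ar by (simp add: field_simps)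
  have "(x2-x1)*(of_int d*(l*(x1-x3) - y1)^2 - (of_int a*x3^3 + of_int b*x3^2 + of_int c*x3 + of_int e)) = 0"
    by (rule chord_alg[OF P1[unfolded Fr_def] P2[unfolded Fr_def] hl hx3])
  hence "of_int d*(l*(x1-x3) - y1)^2 = of_int a*x3^3 + of_int b*x3^2 + of_int c*x3 + of_int e"
    using nz by simp
  thus ?thesis unfolding res on_curve_Pt y3_def Fr_def .
qed

lemma hx_frac_upper:
  fixes N D :: int and r :: rat
  assumes D: "D \<noteq> 0" and r: "r = of_int N / of_int D"
  shows "hx (Pt r y) \<le> ln (real_of_int (max \<bar>N\<bar> \<bar>D\<bar>))"
proof -
  obtain p' q' where qo: "quotient_of r = (p', q')" by (cases "quotient_of r") auto
  obtain k where k: "N = k*p'" "D = k*q'" "k \<noteq> 0" using quot_scale[OF D r qo] by blast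
  define mq where "mq = max \<bar>p'\<bar> \<bar>q'\<bar>"
  have mxk: "max \<bar>N\<bar> \<bar>D\<bar> = \<bar>k\<bar> * mq" unfolding k mq_def by (simp add: abs_mult max_mult_distrib_left)
  have mq1: "1 \<le> mq" using hx_ge1[of r] qo unfolding mq_def by simp
  have "mq \<le> \<bar>k\<bar> * mq" using k(3) mq1 by (simp add: mult_le_cancel_right1)
  hence "real_of_int mq \<le> real_of_int (max \<bar>N\<bar> \<bar>D\<bar>)" unfolding mxk by linarith
  moreover have "hx (Pt r y) = ln (real_of_int mq)" using hx_Pt[of r y] qo unfolding mq_def by simp
  moreover have "(0::real) < real_of_int mq" using mq1 by simp
  ultimately show ?thesis by simp
qed

lemma pow_le_M3:
  fixes x M :: int
  assumes "\<bar>x\<bar> \<le> M" "1 \<le> M" "k \<le> 3"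
  shows "\<bar>x\<bar>^k \<le> M^3"
proof -
  have "\<bar>x\<bar>^k \<le> M^k" by (rule power_mono) (use assms in auto)
  also have "M^k \<le> M^3" by (rule power_increasing) (use assms in auto)
  finally show ?thesis .
qed

definition Acoef :: "int \<Rightarrow> int \<Rightarrow> int \<Rightarrow> int \<Rightarrow> int" where
  "Acoef a b c e = \<bar>a\<bar> + \<bar>b\<bar> + \<bar>c\<bar> + \<bar>e\<bar>"

lemma Fi_bound:
  fixes a b c e x M :: int
  assumes "\<bar>x\<bar> \<le> M" "1 \<le> M"
  shows "\<bar>a*x^3 + b*x^2 + c*x + e\<bar> \<le> Acoef a b c e * M^3"
proof -
  have "\<bar>a*x^3 + b*x^2 + c*x + e\<bar> \<le> \<bar>a*x^3\<bar> + \<bar>b*x^2\<bar> + \<bar>c*x\<bar> + \<bar>e\<bar>" by (rule abs_tri4)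
  also have "\<dots> \<le> \<bar>a\<bar>*M^3 + \<bar>b\<bar>*M^3 + \<bar>c\<bar>*M^3 + \<bar>e\<bar>*M^3"
  proof (intro add_mono)
    show "\<bar>a*x^3\<bar> \<le> \<bar>a\<bar>*M^3" unfolding abs_mult power_abs
      by (intro mult_left_mono pow_le_M3) (use assms in auto)
    show "\<bar>b*x^2\<bar> \<le> \<bar>b\<bar>*M^3" unfolding abs_mult power_abs
      by (intro mult_left_mono pow_le_M3) (use assms in auto)
    have "\<bar>x\<bar>^1 \<le> M^3" by (rule pow_le_M3) (use assms in auto)
    then show "\<bar>c*x\<bar> \<le> \<bar>c\<bar>*M^3" unfolding abs_mult
      by (intro mult_left_mono) auto
    have "1 \<le> M^3" using assms(2) by simp
    then show "\<bar>e\<bar> \<le> \<bar>e\<bar>*M^3" by (simp add: mult_le_cancel_left1)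
  qed
  also have "\<dots> = Acoef a b c e * M^3" unfolding Acoef_def by (simp add: algebra_simps)
  finally show ?thesis .
qed

definition K5 :: "int \<Rightarrow> int \<Rightarrow> int \<Rightarrow> int \<Rightarrow> int" where
  "K5 a b c e = 4 * Acoef a b c e + 4 * \<bar>b\<bar> + 12 * \<bar>a\<bar> + 1"

lemma sum_height:
  fixes a b c e d x y x' y' :: int
  assumes a: "a \<noteq> 0" and d: "d \<noteq> 0" and ne: "x \<noteq> x'"
    and P1: "d * y^2 = a*x^3 + b*x^2 + c*x + e" and P2: "d * y'^2 = a*x'^3 + b*x'^2 + c*x' + e"
  shows "hx (ec_add [:e,c,b,a:] d (Pt (of_int x) (of_int y)) (Pt (of_int x') (of_int y')))
     \<le> ln (real_of_int (K5 a b c e)) + 3 * ln (real_of_int (max (max \<bar>x\<bar> \<bar>x'\<bar>) 1))"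
proof -
  define M where "M = max (max \<bar>x\<bar> \<bar>x'\<bar>) 1"
  define Fx where "Fx = a*x^3 + b*x^2 + c*x + e"
  define Fx' where "Fx' = a*x'^3 + b*x'^2 + c*x' + e"
  define Nn where "Nn = Fx + Fx' - 2*d*y*y' - (b + a*x + a*x')*(x'-x)^2"
  define Dd where "Dd = a*(x'-x)^2"
  define l where "l = (of_int y' - of_int y) / (of_int x' - of_int x :: rat)"
  define x3 where "x3 = (of_int d * l^2 - of_int b) / of_int a - of_int x - (of_int x' :: rat)"
  define y3 where "y3 = l * (of_int x - x3) - of_int y"
  have res: "ec_add [:e,c,b,a:] d (Pt (of_int x) (of_int y)) (Pt (of_int x') (of_int y')) = Pt x3 y3"
    unfolding ec_add_expl using ne by (simp add: Let_def l_def x3_def y3_def)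
  have Dd0: "Dd \<noteq> 0" unfolding Dd_def using a ne by simp
  have nz: "(of_int x' - of_int x :: rat) \<noteq> 0" using ne by simp
  have ar: "(of_int a :: rat) \<noteq> 0" using a by simp
  have P1r: "(of_int d * of_int y^2 :: rat) = of_int Fx" unfolding Fx_def using P1
    by (metis of_int_mult of_int_power)
  have P2r: "(of_int d * of_int y'^2 :: rat) = of_int Fx'" unfolding Fx'_def using P2
    by (metis of_int_mult of_int_power)
  have dl: "of_int d * l^2 * (of_int x' - of_int x)^2 = of_int Fx' + of_int Fx - 2 * of_int d * of_int y * (of_int y' :: rat)"
  proof -
    have "of_int d * l^2 * (of_int x' - of_int x)^2 = of_int d * (l * (of_int x' - of_int x))^2"
      by (simp add: power_mult_distrib)
    also have "l * (of_int x' - of_int x) = of_int y' - of_int y" unfolding l_def using nz by simp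
    finally show ?thesis using P1r P2r by (simp add: algebra_simps power2_eq_square)
  qed
  have "x3 * of_int Dd = of_int Nn"
  proof -
    have ax3: "of_int a * x3 = of_int d * l^2 - of_int b - of_int a * of_int x - of_int a * of_int x'"
      unfolding x3_def using ar by (simp add: field_simps)
    have "x3 * of_int Dd = (of_int a * x3) * (of_int x' - of_int x)^2"
      unfolding Dd_def by (simp add: algebra_simps)
    also have "\<dots> = (of_int d * l^2 - of_int b - of_int a * of_int x - of_int a * of_int x') * (of_int x' - of_int x)^2"
      unfolding ax3 ..
    also have "\<dots> = of_int d * l^2 * (of_int x' - of_int x)^2 - (of_int b + of_int a * of_int x + of_int a * of_int x') * (of_int x' - of_int x)^2"
      by (simp add: algebra_simps)
    also have "\<dots> = of_int Nn" unfolding dl Nn_def by simp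
    finally show ?thesis .
  qed
  hence x3e: "x3 = of_int Nn / of_int Dd" using Dd0 by (simp add: field_simps)
  have M1: "1 \<le> M" and Mx: "\<bar>x\<bar> \<le> M" and Mx': "\<bar>x'\<bar> \<le> M" unfolding M_def by auto
  have bF: "\<bar>Fx\<bar> \<le> Acoef a b c e * M^3" unfolding Fx_def by (rule Fi_bound[OF Mx M1])
  have bF': "\<bar>Fx'\<bar> \<le> Acoef a b c e * M^3" unfolding Fx'_def by (rule Fi_bound[OF Mx' M1])
  have A0: "0 \<le> Acoef a b c e * M^3" unfolding Acoef_def using M1 by simp
  have bdyy: "\<bar>d*y*y'\<bar> \<le> Acoef a b c e * M^3"
  proof -
    have "(d*y*y')^2 = Fx * Fx'" unfolding Fx_def Fx'_def P1[symmetric] P2[symmetric]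
      by (simp add: algebra_simps power2_eq_square)
    also have "\<dots> \<le> \<bar>Fx\<bar> * \<bar>Fx'\<bar>" by (simp add: abs_mult[symmetric])
    also have "\<dots> \<le> (Acoef a b c e * M^3) * (Acoef a b c e * M^3)"
      by (intro mult_mono bF bF') (use A0 in auto)
    finally have "(d*y*y')^2 \<le> (Acoef a b c e * M^3)^2" by (simp add: power2_eq_square)
    thus ?thesis using power2_le_iff_abs_le[OF A0] by simp
  qed
  have bmid: "\<bar>(b + a*x + a*x')*(x'-x)^2\<bar> \<le> 4*(\<bar>b\<bar> + 2*\<bar>a\<bar>) * M^3"
  proof -
    have "\<bar>b + a*x + a*x'\<bar> \<le> \<bar>b\<bar> + \<bar>a\<bar>*\<bar>x\<bar> + \<bar>a\<bar>*\<bar>x'\<bar>"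
      using abs_triangle_ineq[of "b + a*x" "a*x'"] abs_triangle_ineq[of b "a*x"] by (simp add: abs_mult)
    also have "\<dots> \<le> \<bar>b\<bar>*M + \<bar>a\<bar>*M + \<bar>a\<bar>*M"
      using M1 Mx Mx' by (intro add_mono mult_left_mono) (auto simp: mult_le_cancel_left1)
    finally have t1: "\<bar>b + a*x + a*x'\<bar> \<le> (\<bar>b\<bar> + 2*\<bar>a\<bar>) * M" by (simp add: algebra_simps)
    have "\<bar>x'-x\<bar> \<le> 2*M" using Mx Mx' by linarith
    hence t2: "\<bar>(x'-x)^2\<bar> \<le> 4*M^2"
      using power_mono[of "\<bar>x'-x\<bar>" "2*M" 2] by (simp add: power_abs power_mult_distrib)
    have "\<bar>(b + a*x + a*x')*(x'-x)^2\<bar> \<le> ((\<bar>b\<bar> + 2*\<bar>a\<bar>) * M) * (4*M^2)"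
      unfolding abs_mult by (intro mult_mono t1 t2) (use M1 in auto)
    thus ?thesis by (simp add: algebra_simps power2_eq_square power3_eq_cube)
  qed
  have bN: "\<bar>Nn\<bar> \<le> K5 a b c e * M^3"
  proof -
    have "\<bar>Nn\<bar> \<le> \<bar>Fx\<bar> + \<bar>Fx'\<bar> + 2*\<bar>d*y*y'\<bar> + \<bar>(b + a*x + a*x')*(x'-x)^2\<bar>"
      unfolding Nn_def using abs_tri4[of Fx Fx' "- 2*d*y*y'" "- ((b + a*x + a*x')*(x'-x)^2)"]
      by (simp add: abs_mult)
    also have "\<dots> \<le> Acoef a b c e * M^3 + Acoef a b c e * M^3 + 2*(Acoef a b c e * M^3) + 4*(\<bar>b\<bar> + 2*\<bar>a\<bar>) * M^3"
      by (intro add_mono bF bF' bmid mult_left_mono bdyy) auto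
    also have "\<dots> \<le> K5 a b c e * M^3"
      unfolding K5_def using M1 by (simp add: algebra_simps)
    finally show ?thesis .
  qed
  have bD: "\<bar>Dd\<bar> \<le> K5 a b c e * M^3"
  proof -
    have "\<bar>x'-x\<bar> \<le> 2*M" using Mx Mx' by linarith
    hence t2: "(x'-x)^2 \<le> 4*M^2"
      using power_mono[of "\<bar>x'-x\<bar>" "2*M" 2] by (simp add: power_abs power_mult_distrib)
    have "\<bar>Dd\<bar> = \<bar>a\<bar> * (x'-x)^2" unfolding Dd_def by (simp add: abs_mult)
    also have "\<dots> \<le> \<bar>a\<bar> * (4*M^2)" by (intro mult_left_mono t2) auto
    also have "\<dots> \<le> \<bar>a\<bar> * (4*M^3)"
      using M1 by (intro mult_left_mono) (auto simp: power2_eq_square power3_eq_cube)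
    also have "\<dots> \<le> K5 a b c e * M^3"
      unfolding K5_def Acoef_def using M1 by (simp add: algebra_simps)
    finally show ?thesis .
  qed
  have mx: "max \<bar>Nn\<bar> \<bar>Dd\<bar> \<le> K5 a b c e * M^3" using bN bD by simp
  have mx1: "1 \<le> max \<bar>Nn\<bar> \<bar>Dd\<bar>" using Dd0 by linarith
  have "hx (Pt x3 y3) \<le> ln (real_of_int (max \<bar>Nn\<bar> \<bar>Dd\<bar>))" by (rule hx_frac_upper[OF Dd0 x3e])
  also have "\<dots> \<le> ln (real_of_int (K5 a b c e * M^3))"
  proof (rule ln_mono)
    show "real_of_int (max \<bar>Nn\<bar> \<bar>Dd\<bar>) \<le> real_of_int (K5 a b c e * M^3)"
      using mx by (simp only: of_int_le_iff)
    show "0 < real_of_int (max \<bar>Nn\<bar> \<bar>Dd\<bar>)" using mx1 by linarith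
  qed
  also have "\<dots> = ln (real_of_int (K5 a b c e)) + 3 * ln (real_of_int M)"
  proof -
    have "(0::real) < real_of_int (K5 a b c e)" unfolding K5_def Acoef_def by simp
    moreover have "(0::real) < real_of_int M" using M1 by simp
    ultimately show ?thesis by (simp add: ln_mult ln_realpow)
  qed
  finally show ?thesis unfolding res M_def .
qed

theorem lemma4p17:
  fixes f :: "int poly"
  assumes "degree f = 3" and "cubic_disc f \<noteq> 0"
  shows "\<exists>C::real. \<forall>(d::int) (x::int) (y::int) (x'::int) (y'::int).
     squarefree d \<longrightarrow> d * y^2 = poly f x \<longrightarrow> d * y'^2 = poly f x' \<longrightarrow> (x, y) \<noteq> (x', y') \<longrightarrow>
     canon_height f d (ec_add f d (Pt (of_int x) (of_int y)) (Pt (of_int x') (of_int y')))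
       \<le> 3 * max (canon_height f d (Pt (of_int x) (of_int y)))
                 (canon_height f d (Pt (of_int x') (of_int y'))) + C"
proof -
  define a where "a = coeff f 3"
  define b where "b = coeff f 2"
  define c where "c = coeff f 1"
  define e where "e = coeff f 0"
  have fe: "f = [:e,c,b,a:]" unfolding a_def b_def c_def e_def by (rule f_explicit[OF assms(1)])
  have f0: "f \<noteq> 0" using assms(1) by auto
  have a0: "a \<noteq> 0" unfolding a_def using f0 assms(1) leading_coeff_0_iff[of f] by simp
  have disc: "discr a b c e \<noteq> 0" using assms(2)
    unfolding cubic_disc_def discr_def a_def b_def c_def e_def Let_def by simp
  define K where "K = K0 a b c e / 3"
  define A0 where "A0 = max 0 (ln (real_of_int (K5 a b c e)))"
  have polyf: "poly f z = a*z^3 + b*z^2 + c*z + e" for z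
    unfolding fe by (simp add: algebra_simps power2_eq_square power3_eq_cube)
  have cb: "\<bar>2 * canon_height f d P - hx P\<bar> \<le> K" if "d \<noteq> 0" "on_curve f d P" for d P
    using canon_bound[OF a0 that(1) disc, of P] that(2) unfolding fe K_def by simp
  show ?thesis
  proof (intro exI allI impI)
    fix d x y x' y' :: int
    assume sf: "squarefree d" and c1: "d * y^2 = poly f x" and c2: "d * y'^2 = poly f x'"
      and ne: "(x, y) \<noteq> (x', y')"
    have d0: "d \<noteq> 0" using sf not_squarefree_0 by auto
    define P where "P = Pt (of_int x) (of_int y)"
    define P' where "P' = Pt (of_int x') (of_int y')"
    define S where "S = ec_add f d P P'"
    have c1': "d * y^2 = a*x^3 + b*x^2 + c*x + e" using c1 polyf by simp
    have c2': "d * y'^2 = a*x'^3 + b*x'^2 + c*x' + e" using c2 polyf by simp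
    have oc_int: "on_curve f d (Pt (of_int z) (of_int w))" if "d * w^2 = a*z^3 + b*z^2 + c*z + e" for z w
    proof -
      have "(of_int (d * w^2) :: rat) = of_int (a*z^3 + b*z^2 + c*z + e)" using that by simp
      thus ?thesis unfolding fe on_curve_Pt Fr_def by simp
    qed
    have ocP: "on_curve f d P" unfolding P_def by (rule oc_int[OF c1'])
    have ocP': "on_curve f d P'" unfolding P'_def by (rule oc_int[OF c2'])
    define M where "M = max (max \<bar>x\<bar> \<bar>x'\<bar>) 1"
    have M1: "1 \<le> M" unfolding M_def by simp
    have lnM0: "0 \<le> ln (real_of_int M)" using M1 by simp
    have hP: "hx P = ln (real_of_int (max \<bar>x\<bar> 1))" unfolding P_def by (rule hx_int)
    have hP': "hx P' = ln (real_of_int (max \<bar>x'\<bar> 1))" unfolding P'_def by (rule hx_int)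
    have lnM: "ln (real_of_int M) \<le> max (hx P) (hx P')"
    proof -
      have "M = max \<bar>x\<bar> 1 \<or> M = max \<bar>x'\<bar> 1" unfolding M_def by linarith
      thus ?thesis unfolding hP hP' by auto
    qed
    have Sb: "on_curve f d S \<and> hx S \<le> A0 + 3 * ln (real_of_int M)"
    proof (cases "x = x'")
      case True
      have "d * y^2 = d * y'^2" using c1' c2' True by simp
      hence "y^2 = y'^2" using d0 by simp
      hence "y = y' \<or> y = - y'" by (simp add: power2_eq_iff)
      hence "y' = - y" using ne True by auto
      hence "S = Zero_pt" unfolding S_def P_def P'_def fe using True by simp
      then show ?thesis using lnM0 unfolding A0_def by (simp add: on_curve_def)
    next
      case False
      have "hx S \<le> ln (real_of_int (K5 a b c e)) + 3 * ln (real_of_int M)"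
        unfolding S_def P_def P'_def fe M_def by (rule sum_height[OF a0 d0 False c1' c2'])
      moreover have "on_curve f d S"
      proof -
        have xr: "(of_int x :: rat) \<noteq> of_int x'" using False by simp
        have r1: "of_int d * (of_int y)^2 = Fr a b c e (of_int x)"
          using ocP unfolding P_def fe on_curve_Pt .
        have r2: "of_int d * (of_int y')^2 = Fr a b c e (of_int x')"
          using ocP' unfolding P'_def fe on_curve_Pt .
        show ?thesis unfolding S_def P_def P'_def fe by (rule chord_on_curve[OF a0 xr r1 r2])
      qed
      ultimately show ?thesis unfolding A0_def by linarith
    qed
    have "\<bar>2 * canon_height f d S - hx S\<bar> \<le> K" using cb[OF d0, of S] Sb by blast
    hence hS: "canon_height f d S \<le> hx S / 2 + K / 2" unfolding abs_le_iff by (elim conjE) linarith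
    have hPl: "hx P / 2 - K / 2 \<le> canon_height f d P" using cb[OF d0 ocP] unfolding abs_le_iff by (elim conjE) linarith
    have hP'l: "hx P' / 2 - K / 2 \<le> canon_height f d P'" using cb[OF d0 ocP'] unfolding abs_le_iff by (elim conjE) linarith
    have "max (hx P) (hx P') - K \<le> 2 * max (canon_height f d P) (canon_height f d P')"
      using hPl hP'l by linarith
    hence "ln (real_of_int M) - K \<le> 2 * max (canon_height f d P) (canon_height f d P')"
      using lnM by linarith
    hence "canon_height f d S \<le> 3 * max (canon_height f d P) (canon_height f d P') + (A0/2 + 2*K)"
      using hS Sb by linarith
    thus "canon_height f d (ec_add f d (Pt (of_int x) (of_int y)) (Pt (of_int x') (of_int y')))
       \<le> 3 * max (canon_height f d (Pt (of_int x) (of_int y)))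
                 (canon_height f d (Pt (of_int x') (of_int y'))) + (A0/2 + 2*K)"
      unfolding S_def P_def P'_def .
  qed
qed

end
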